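(* Under the standing assumptions of the setup, for every $(v,w)$ with $\nu(v,w)>0$, \[ \gamma_\ell(v,w)\le \mathbb{E}(Y^1-Y^0\mid V=v,W=w,E=1)\le \gamma_u(v,w), \] where \[ \gamma_\ell(v,w)=\max\left\{\frac{\mu_1(v)-\mu_0(v)-(b-a)(1-\nu(v,w))}{\nu(v,w)},\,a-b\right\},\qquad \gamma_u(v,w)=\min\left\{\frac{\mu_1(v)-\mu_0(v)-(a-b)(1-\nu(v,w))}{\nu(v,w)},\,b-a\right\}. \]
   Context: Setup: there are random variables $V$ (covariates, discrete or continuous), $W$ (covariates taking finitely many values), a population indicator $E\in\{0,1\}$ ($E=1$: study population, $E=0$: target population), a treatment $A\in\{0,1\}$, potential outcomes $Y^1,Y^0\in[a,b]$ almost surely for known constants $a<b$, and observed outcome $Y=Y^A$ (consistency). In the study population ($E=1$) treatment is unconfounded given $V$: $A\perp\!\!\!\perp (Y^0,Y^1)\mid V,E=1$. Positivity: $\mathbb{P}(A=a'\mid V=v,W=w)>0$ for $a'\in\{0,1\}$ and all $(v,w)$. Transport assumptions: (1) $\mathbb{P}(W=w\mid V=v,E=1)=\mathbb{P}(W=w\mid V=v,E=0)$ for all $v,w$; (2) $\mathbb{E}(Y^1-Y^0\mid V,W,E=1)=\mathbb{E}(Y^1-Y^0\mid V,W,E=0)$. Notation: $\mu_{a'}(v)=\mathbb{E}(Y\mid V=v,A=a',E=1)$ for $a'\in\{0,1\}$, and $\nu(v,w)=\mathbb{P}(W=w\mid V=v,E=0)$. *)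

theory Defs
  imports "HOL-Probability.Probability"
begin

text \<open>A version of the conditional expectation E(f | G, S) of f given the random
  element G (with values in the measurable space N) within the subpopulation
  (event) S, represented (Doob--Dynkin) as a measurable function g on the value
  space of G: for every measurable set B of values,
  E(f 1_S 1_{G in B}) = E(g(G) 1_S 1_{G in B}).  Division by P(S) cancels.\<close>
definition cond_exp_version ::
  "'a measure \<Rightarrow> 'g measure \<Rightarrow> ('a \<Rightarrow> 'g) \<Rightarrow> 'a set \<Rightarrow> ('a \<Rightarrow> real) \<Rightarrow> ('g \<Rightarrow> real) \<Rightarrow> bool"
where
  "cond_exp_version M N G S f g \<longleftrightarrow>
     g \<in> borel_measurable N \<and>
     integrable M (\<lambda>x. indicator S x * g (G x)) \<and>
     (\<forall>B\<in>sets N. (\<integral>x. indicator (S \<inter> G -` B) x * f x \<partial>M)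
                 = (\<integral>x. indicator (S \<inter> G -` B) x * g (G x) \<partial>M))"

definition cond_prob_version ::
  "'a measure \<Rightarrow> 'g measure \<Rightarrow> ('a \<Rightarrow> 'g) \<Rightarrow> 'a set \<Rightarrow> 'a set \<Rightarrow> ('g \<Rightarrow> real) \<Rightarrow> bool"
where
  "cond_prob_version M N G S C p \<longleftrightarrow> cond_exp_version M N G S (indicator C) p"

definition gamma_l :: "real \<Rightarrow> real \<Rightarrow> real \<Rightarrow> real \<Rightarrow> real \<Rightarrow> real" where
  "gamma_l a b m1 m0 n = max ((m1 - m0 - (b - a) * (1 - n)) / n) (a - b)"

definition gamma_u :: "real \<Rightarrow> real \<Rightarrow> real \<Rightarrow> real \<Rightarrow> real \<Rightarrow> real" where
  "gamma_u a b m1 m0 n = min ((m1 - m0 - (a - b) * (1 - n)) / n) (b - a)"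

end

theory Submission
  imports Defs
begin


lemma integrable_cong_fun: assumes "integrable M f" "\<And>x. x \<in> space M \<Longrightarrow> f x = g x" shows "integrable M g"
proof -
  have "integrable M f = integrable M g" by (rule Bochner_Integration.integrable_cong) (auto simp: assms)
  then show ?thesis using assms(1) by simp
qed

lemma nn_integral_cong_fun: "(\<And>x. x \<in> space M \<Longrightarrow> f x = g x) \<Longrightarrow> (\<integral>\<^sup>+x. f x \<partial>M) = (\<integral>\<^sup>+x. g x \<partial>M)"
  by (rule nn_integral_cong)

lemma key_nonneg:
  fixes M :: "'a measure" and N :: "'g measure"
  assumes cev: "cond_exp_version M N G S f g"
    and G[measurable]: "G \<in> measurable M N" and S[measurable]: "S \<in> sets M"
    and f[measurable]: "f \<in> borel_measurable M"
    and fpos: "AE x in M. x \<in> S \<longrightarrow> 0 \<le> f x"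
    and fint: "integrable M (\<lambda>x. indicator S x * f x)"
  shows "AE x in M. x \<in> S \<longrightarrow> 0 \<le> g (G x)"
proof -
  have g[measurable]: "g \<in> borel_measurable N" and gint: "integrable M (\<lambda>x. indicator S x * g (G x))"
   and eq: "\<And>B. B \<in> sets N \<Longrightarrow> (\<integral>x. indicator (S \<inter> G -` B) x * f x \<partial>M)
                 = (\<integral>x. indicator (S \<inter> G -` B) x * g (G x) \<partial>M)"
    using cev unfolding cond_exp_version_def by auto
  define B where "B = {y\<in>space N. g y < 0}"
  have B[measurable]: "B \<in> sets N" unfolding B_def by measurable
  have SB: "S \<inter> G -` B = S \<inter> (G -` B \<inter> space M)" using sets.sets_into_space[OF S] by auto
  have SBm[measurable]: "S \<inter> G -` B \<in> sets M" unfolding SB by measurable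
  have int2: "integrable M (\<lambda>x. - (indicator (S \<inter> G -` B) x * g (G x)))"
  proof -
    have "integrable M (\<lambda>x. (indicator S x * g (G x)) * indicator (G -` B \<inter> space M) x)"
      by (rule integrable_real_mult_indicator) (auto intro: gint)
    then have "integrable M (\<lambda>x. indicator (S \<inter> G -` B) x * g (G x))"
      by (rule integrable_cong_fun) (auto simp: indicator_def)
    then show ?thesis by (rule integrable_minus)
  qed
  have "0 \<le> (\<integral>x. indicator (S \<inter> G -` B) x * f x \<partial>M)"
    by (rule integral_nonneg_AE) (use fpos in \<open>auto simp: indicator_def\<close>)
  then have "0 \<le> (\<integral>x. indicator (S \<inter> G -` B) x * g (G x) \<partial>M)" using eq[OF B] by simp
  moreover have "0 \<le> (\<integral>x. - (indicator (S \<inter> G -` B) x * g (G x)) \<partial>M)"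
    by (rule integral_nonneg_AE) (auto simp: indicator_def B_def)
  ultimately have "(\<integral>x. - (indicator (S \<inter> G -` B) x * g (G x)) \<partial>M) = 0" by simp
  then have "AE x in M. - (indicator (S \<inter> G -` B) x * g (G x)) = 0"
    by (subst (asm) integral_nonneg_eq_0_iff_AE[OF int2]) (auto simp: indicator_def B_def mult_le_0_iff)
  moreover have "AE x in M. x \<in> space M" by (rule AE_space)
  ultimately show ?thesis
    by eventually_elim (auto simp: indicator_def B_def measurable_space[OF G] split: if_splits)
qed

lemma nn_push:
  fixes h :: "'a \<Rightarrow> ennreal" and k :: "'g \<Rightarrow> ennreal"
  assumes [measurable]: "G \<in> measurable M N" "h \<in> borel_measurable M" "k \<in> borel_measurable N"
  shows "(\<integral>\<^sup>+y. k y \<partial>distr (density M h) N G) = (\<integral>\<^sup>+x. h x * k (G x) \<partial>M)"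
  by (simp add: nn_integral_distr nn_integral_density)

lemma key_nn:
  fixes M :: "'a measure" and N :: "'g measure" and k :: "'g \<Rightarrow> ennreal"
  assumes cev: "cond_exp_version M N G S f g"
    and G[measurable]: "G \<in> measurable M N" and S[measurable]: "S \<in> sets M"
    and f[measurable]: "f \<in> borel_measurable M"
    and fpos: "AE x in M. x \<in> S \<longrightarrow> 0 \<le> f x"
    and fint: "integrable M (\<lambda>x. indicator S x * f x)"
    and k[measurable]: "k \<in> borel_measurable N"
  shows "(\<integral>\<^sup>+x. indicator S x * ennreal (f x) * k (G x) \<partial>M) = (\<integral>\<^sup>+x. indicator S x * ennreal (g (G x)) * k (G x) \<partial>M)"
proof -
  have g[measurable]: "g \<in> borel_measurable N" and gint: "integrable M (\<lambda>x. indicator S x * g (G x))"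
   and eq: "\<And>B. B \<in> sets N \<Longrightarrow> (\<integral>x. indicator (S \<inter> G -` B) x * f x \<partial>M)
                 = (\<integral>x. indicator (S \<inter> G -` B) x * g (G x) \<partial>M)"
    using cev unfolding cond_exp_version_def by auto
  have gpos: "AE x in M. x \<in> S \<longrightarrow> 0 \<le> g (G x)"
    by (rule key_nonneg[OF assms(1-6)])
  have "distr (density M (\<lambda>x. indicator S x * ennreal (f x))) N G = distr (density M (\<lambda>x. indicator S x * ennreal (g (G x)))) N G"
  proof (rule measure_eqI)
    fix B assume B[measurable]: "B \<in> sets (distr (density M (\<lambda>x. indicator S x * ennreal (f x))) N G)"
    then have B': "B \<in> sets N" by simp
    have SB: "S \<inter> G -` B = S \<inter> (G -` B \<inter> space M)" using sets.sets_into_space[OF S] by auto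
    have SBm[measurable]: "S \<inter> G -` B \<in> sets M" unfolding SB by measurable
    have i1: "integrable M (\<lambda>x. indicator (S \<inter> G -` B) x * f x)"
      using integrable_real_mult_indicator[OF _ fint, of "G -` B \<inter> space M"]
      by (rule integrable_cong_fun) (auto simp: indicator_def)
    have i2: "integrable M (\<lambda>x. indicator (S \<inter> G -` B) x * g (G x))"
      using integrable_real_mult_indicator[OF _ gint, of "G -` B \<inter> space M"]
      by (rule integrable_cong_fun) (auto simp: indicator_def)
    have "emeasure (distr (density M (\<lambda>x. indicator S x * ennreal (f x))) N G) B
       = (\<integral>\<^sup>+x. ennreal (indicator (S \<inter> G -` B) x * f x) \<partial>M)"
      by (simp add: emeasure_distr emeasure_density B') (rule nn_integral_cong, auto simp: indicator_def)
    also have "\<dots> = ennreal (\<integral>x. indicator (S \<inter> G -` B) x * f x \<partial>M)"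
      by (rule nn_integral_eq_integral[OF i1]) (use fpos in \<open>auto simp: indicator_def\<close>)
    also have "\<dots> = ennreal (\<integral>x. indicator (S \<inter> G -` B) x * g (G x) \<partial>M)" using eq[OF B'] by simp
    also have "\<dots> = (\<integral>\<^sup>+x. ennreal (indicator (S \<inter> G -` B) x * g (G x)) \<partial>M)"
      by (rule nn_integral_eq_integral[OF i2, symmetric]) (use gpos in \<open>auto simp: indicator_def\<close>)
    also have "\<dots> = emeasure (distr (density M (\<lambda>x. indicator S x * ennreal (g (G x)))) N G) B"
      by (simp add: emeasure_distr emeasure_density B') (rule nn_integral_cong, auto simp: indicator_def)
    finally show "emeasure (distr (density M (\<lambda>x. indicator S x * ennreal (f x))) N G) B = emeasure (distr (density M (\<lambda>x. indicator S x * ennreal (g (G x)))) N G) B" .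
  qed simp
  then have "(\<integral>\<^sup>+y. k y \<partial>distr (density M (\<lambda>x. indicator S x * ennreal (f x))) N G)
      = (\<integral>\<^sup>+y. k y \<partial>distr (density M (\<lambda>x. indicator S x * ennreal (g (G x)))) N G)" by simp
  then show ?thesis by (simp add: nn_push)
qed

lemma exists_version:
  fixes M :: "'a measure" and N :: "'g measure"
  assumes fm: "finite_measure M"
    and G[measurable]: "G \<in> measurable M N" and S[measurable]: "S \<in> sets M"
    and f[measurable]: "f \<in> borel_measurable M"
    and fpos: "AE x in M. x \<in> S \<longrightarrow> 0 \<le> f x"
    and fint: "integrable M (\<lambda>x. indicator S x * f x)"
  shows "\<exists>g. cond_exp_version M N G S f g \<and> (\<forall>y. 0 \<le> g y)"
proof -
  interpret finite_measure M by fact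
  define P where "P = distr (density M (indicator S)) N G"
  define Q where "Q = distr (density M (\<lambda>x. indicator S x * ennreal (f x))) N G"
  have sP[simp]: "sets P = sets N" and sQ[simp]: "sets Q = sets N" and spP[simp]: "space P = space N"
    unfolding P_def Q_def by auto
  have intf: "(\<integral>\<^sup>+x. ennreal (indicator S x * f x) \<partial>M) = ennreal (\<integral>x. indicator S x * f x \<partial>M)"
    by (rule nn_integral_eq_integral[OF fint]) (use fpos in \<open>auto simp: indicator_def\<close>)
  have eQ: "emeasure Q B = (\<integral>\<^sup>+x. indicator S x * ennreal (f x) * indicator B (G x) \<partial>M)" if "B \<in> sets N" for B
    unfolding Q_def using that
    by (simp add: emeasure_distr emeasure_density) (rule nn_integral_cong, auto simp: indicator_def)
  have eP: "emeasure P B = (\<integral>\<^sup>+x. indicator S x * indicator B (G x) \<partial>M)" if "B \<in> sets N" for B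
    unfolding P_def using that
    by (simp add: emeasure_distr emeasure_density) (rule nn_integral_cong, auto simp: indicator_def)
  have "emeasure P (space N) \<le> emeasure M (space M)"
    unfolding eP[OF sets.top] by (rule order_trans[OF nn_integral_mono[of _ _ "\<lambda>_. 1"]])
      (auto simp: indicator_def)
  moreover have "emeasure M (space M) < \<top>" using emeasure_finite[of "space M"] top.not_eq_extremum by blast
  ultimately have "emeasure P (space N) < \<top>" by (rule le_less_trans)
  then have "emeasure P (space P) \<noteq> \<infinity>" by simp
  then interpret P: finite_measure P by (rule finite_measureI)
  have ac: "absolutely_continuous P Q"
    unfolding absolutely_continuous_def
  proof
    fix B assume "B \<in> null_sets P"
    then have B: "B \<in> sets N" and "emeasure P B = 0" by auto
    then have "AE x in M. indicator S x * indicator B (G x) = (0::ennreal)"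
      using eP[OF B] by (subst nn_integral_0_iff_AE[symmetric]) auto
    note [measurable] = B
    have "(\<integral>\<^sup>+x. indicator S x * ennreal (f x) * indicator B (G x) \<partial>M) = 0"
      apply (subst nn_integral_0_iff_AE)
       apply measurable
      using \<open>AE x in M. indicator S x * indicator B (G x) = (0::ennreal)\<close>
      by eventually_elim (simp add: indicator_def split: if_splits)
    then show "B \<in> null_sets Q" using eQ[OF B] B by auto
  qed
  obtain h where h[measurable]: "h \<in> borel_measurable P" and dh: "density P h = Q"
    using P.Radon_Nikodym[OF ac] by auto
  have hN[measurable]: "h \<in> borel_measurable N" using h by (simp cong: measurable_cong_sets)
  have Qfin: "emeasure Q (space N) < \<infinity>"
  proof -
    have "emeasure Q (space N) = (\<integral>\<^sup>+x. ennreal (indicator S x * f x) \<partial>M)"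
      unfolding eQ[OF sets.top]
      by (rule nn_integral_cong) (auto simp: indicator_def measurable_space[OF G])
    then show ?thesis using intf by simp
  qed
  have "(\<integral>\<^sup>+y. h y \<partial>P) = emeasure Q (space N)"
    unfolding dh[symmetric] by (simp add: emeasure_density) (rule nn_integral_cong, auto)
  then have "AE y in P. h y \<noteq> \<infinity>" using Qfin by (intro nn_integral_PInf_AE) auto
  then have dg: "density P (\<lambda>y. ennreal (enn2real (h y))) = Q"
    unfolding dh[symmetric] by (intro density_cong) (auto elim!: eventually_mono simp: less_top)
  define g where "g y = enn2real (h y)" for y
  have g[measurable]: "g \<in> borel_measurable N" unfolding g_def by measurable
  have gint_nn: "(\<integral>\<^sup>+x. indicator S x * ennreal (g (G x)) * indicator B (G x) \<partial>M) = emeasure Q B"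
    if B: "B \<in> sets N" for B
  proof -
    have "emeasure Q B = (\<integral>\<^sup>+y. ennreal (g y) * indicator B y \<partial>P)"
      unfolding dg[symmetric] g_def using B by (simp add: emeasure_density)
    also have "\<dots> = (\<integral>\<^sup>+x. indicator S x * (ennreal (g (G x)) * indicator B (G x)) \<partial>M)"
      unfolding P_def using B by (subst nn_push) auto
    finally show ?thesis by (simp add: mult.assoc)
  qed
  have gint: "integrable M (\<lambda>x. indicator S x * g (G x))"
  proof (rule integrableI_nonneg)
    show "AE x in M. 0 \<le> indicator S x * g (G x)" by (auto simp: g_def)
    have "(\<integral>\<^sup>+x. ennreal (indicator S x * g (G x)) \<partial>M) = emeasure Q (space N)"
      unfolding gint_nn[OF sets.top, symmetric]
      by (rule nn_integral_cong) (auto simp: indicator_def measurable_space[OF G])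
    then show "(\<integral>\<^sup>+x. ennreal (indicator S x * g (G x)) \<partial>M) < \<infinity>" using Qfin by simp
  qed simp
  have "cond_exp_version M N G S f g"
    unfolding cond_exp_version_def
  proof (intro conjI g gint ballI)
    fix B assume B[measurable]: "B \<in> sets N"
    have SB: "S \<inter> G -` B = S \<inter> (G -` B \<inter> space M)" using sets.sets_into_space[OF S] by auto
    have SBm[measurable]: "S \<inter> G -` B \<in> sets M" unfolding SB by measurable
    have i1: "integrable M (\<lambda>x. indicator (S \<inter> G -` B) x * f x)"
      using integrable_real_mult_indicator[OF _ fint, of "G -` B \<inter> space M"]
      by (rule integrable_cong_fun) (auto simp: indicator_def)
    have i2: "integrable M (\<lambda>x. indicator (S \<inter> G -` B) x * g (G x))"
      using integrable_real_mult_indicator[OF _ gint, of "G -` B \<inter> space M"]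
      by (rule integrable_cong_fun) (auto simp: indicator_def)
    have "ennreal (\<integral>x. indicator (S \<inter> G -` B) x * f x \<partial>M) = (\<integral>\<^sup>+x. ennreal (indicator (S \<inter> G -` B) x * f x) \<partial>M)"
      by (rule nn_integral_eq_integral[OF i1, symmetric]) (use fpos in \<open>auto simp: indicator_def\<close>)
    also have "\<dots> = emeasure Q B" unfolding eQ[OF B]
      by (rule nn_integral_cong) (auto simp: indicator_def)
    also have "\<dots> = (\<integral>\<^sup>+x. ennreal (indicator (S \<inter> G -` B) x * g (G x)) \<partial>M)" unfolding gint_nn[OF B, symmetric]
      by (rule nn_integral_cong) (auto simp: indicator_def)
    also have "\<dots> = ennreal (\<integral>x. indicator (S \<inter> G -` B) x * g (G x) \<partial>M)"
      by (rule nn_integral_eq_integral[OF i2]) (auto simp: indicator_def g_def)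
    finally have "ennreal (\<integral>x. indicator (S \<inter> G -` B) x * f x \<partial>M) = ennreal (\<integral>x. indicator (S \<inter> G -` B) x * g (G x) \<partial>M)" .
    moreover have "0 \<le> (\<integral>x. indicator (S \<inter> G -` B) x * f x \<partial>M)"
      by (rule integral_nonneg_AE) (use fpos in \<open>auto simp: indicator_def\<close>)
    moreover have "0 \<le> (\<integral>x. indicator (S \<inter> G -` B) x * g (G x) \<partial>M)"
      by (rule integral_nonneg_AE) (auto simp: indicator_def g_def)
    ultimately show "(\<integral>x. indicator (S \<inter> G -` B) x * f x \<partial>M) = (\<integral>x. indicator (S \<inter> G -` B) x * g (G x) \<partial>M)"
      by simp
  qed
  then show ?thesis by (auto simp: g_def)
qed

lemma key_prob:
  fixes M :: "'a measure" and N :: "'g measure" and k :: "'g \<Rightarrow> ennreal"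
  assumes cev: "cond_prob_version M N G S C p" and fm: "finite_measure M"
    and G[measurable]: "G \<in> measurable M N" and S[measurable]: "S \<in> sets M"
    and C[measurable]: "C \<in> sets M"
    and k[measurable]: "k \<in> borel_measurable N"
  shows "(\<integral>\<^sup>+x. indicator S x * indicator C x * k (G x) \<partial>M) = (\<integral>\<^sup>+x. indicator S x * ennreal (p (G x)) * k (G x) \<partial>M)"
    and "AE x in M. x \<in> S \<longrightarrow> 0 \<le> p (G x)"
proof -
  interpret finite_measure M by fact
  have int: "integrable M (\<lambda>x. indicator S x * indicator C x :: real)"
    by (rule integrable_const_bound[where B=1]) (auto simp: indicator_def)
  have c: "cond_exp_version M N G S (indicator C) p" using cev unfolding cond_prob_version_def .
  from key_nn[OF c G S _ _ int k] show "(\<integral>\<^sup>+x. indicator S x * indicator C x * k (G x) \<partial>M) = (\<integral>\<^sup>+x. indicator S x * ennreal (p (G x)) * k (G x) \<partial>M)"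
    by (simp add: ennreal_indicator)
  from key_nonneg[OF c G S _ _ int] show "AE x in M. x \<in> S \<longrightarrow> 0 \<le> p (G x)" by simp
qed

lemma cev_affine:
  fixes M :: "'a measure" and N :: "'g measure"
  assumes cev: "cond_exp_version M N G S f g" and fm: "finite_measure M"
    and G[measurable]: "G \<in> measurable M N" and S[measurable]: "S \<in> sets M"
    and f[measurable]: "f \<in> borel_measurable M"
    and fint: "integrable M (\<lambda>x. indicator S x * f x)"
  shows "cond_exp_version M N G S (\<lambda>x. \<alpha> * f x + \<beta>) (\<lambda>y. \<alpha> * g y + \<beta>)"
proof -
  interpret finite_measure M by fact
  have g[measurable]: "g \<in> borel_measurable N" and gint: "integrable M (\<lambda>x. indicator S x * g (G x))"
   and eq: "\<And>B. B \<in> sets N \<Longrightarrow> (\<integral>x. indicator (S \<inter> G -` B) x * f x \<partial>M)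
                 = (\<integral>x. indicator (S \<inter> G -` B) x * g (G x) \<partial>M)"
    using cev unfolding cond_exp_version_def by auto
  have intS: "integrable M (\<lambda>x. indicator T x :: real)" if "T \<in> sets M" for T
    by (rule integrable_const_bound[where B=1]) (use that in \<open>auto simp: indicator_def\<close>)
  show ?thesis unfolding cond_exp_version_def
  proof (intro conjI ballI)
    show "(\<lambda>y. \<alpha> * g y + \<beta>) \<in> borel_measurable N" by measurable
    have "integrable M (\<lambda>x. \<alpha> * (indicator S x * g (G x)) + \<beta> * indicator S x)"
      using gint intS[OF S] by auto
    then show "integrable M (\<lambda>x. indicator S x * (\<alpha> * g (G x) + \<beta>))"
      by (rule integrable_cong_fun) (auto simp: algebra_simps)
    fix B assume B[measurable]: "B \<in> sets N"
    have SB: "S \<inter> G -` B = S \<inter> (G -` B \<inter> space M)" using sets.sets_into_space[OF S] by auto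
    have SBm[measurable]: "S \<inter> G -` B \<in> sets M" unfolding SB by measurable
    have i1: "integrable M (\<lambda>x. indicator (S \<inter> G -` B) x * f x)"
      using integrable_real_mult_indicator[OF _ fint, of "G -` B \<inter> space M"]
      by (rule integrable_cong_fun) (auto simp: indicator_def)
    have i2: "integrable M (\<lambda>x. indicator (S \<inter> G -` B) x * g (G x))"
      using integrable_real_mult_indicator[OF _ gint, of "G -` B \<inter> space M"]
      by (rule integrable_cong_fun) (auto simp: indicator_def)
    have "(\<integral>x. indicator (S \<inter> G -` B) x * (\<alpha> * f x + \<beta>) \<partial>M)
       = (\<integral>x. \<alpha> * (indicator (S \<inter> G -` B) x * f x) + \<beta> * indicator (S \<inter> G -` B) x \<partial>M)"
      by (rule Bochner_Integration.integral_cong) (auto simp: algebra_simps)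
    also have "\<dots> = \<alpha> * (\<integral>x. indicator (S \<inter> G -` B) x * f x \<partial>M) + \<beta> * (\<integral>x. indicator (S \<inter> G -` B) x \<partial>M)"
      using i1 intS[OF SBm] by simp
    also have "\<dots> = \<alpha> * (\<integral>x. indicator (S \<inter> G -` B) x * g (G x) \<partial>M) + \<beta> * (\<integral>x. indicator (S \<inter> G -` B) x \<partial>M)"
      using eq[OF B] by simp
    also have "\<dots> = (\<integral>x. \<alpha> * (indicator (S \<inter> G -` B) x * g (G x)) + \<beta> * indicator (S \<inter> G -` B) x \<partial>M)"
      using i2 intS[OF SBm] by simp
    also have "\<dots> = (\<integral>x. indicator (S \<inter> G -` B) x * (\<alpha> * g (G x) + \<beta>) \<partial>M)"
      by (rule Bochner_Integration.integral_cong) (auto simp: algebra_simps)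
    finally show "(\<integral>x. indicator (S \<inter> G -` B) x * (\<alpha> * f x + \<beta>) \<partial>M) = (\<integral>x. indicator (S \<inter> G -` B) x * (\<alpha> * g (G x) + \<beta>) \<partial>M)" .
  qed
qed

lemma uniq_nn:
  fixes M :: "'a measure" and N :: "'g measure" and \<phi> \<psi> :: "'g \<Rightarrow> ennreal"
  assumes fm: "finite_measure M"
    and G[measurable]: "G \<in> measurable M N" and S[measurable]: "S \<in> sets M"
    and [measurable]: "\<phi> \<in> borel_measurable N" "\<psi> \<in> borel_measurable N"
    and eq: "\<And>B. B \<in> sets N \<Longrightarrow> (\<integral>\<^sup>+x. indicator S x * \<phi> (G x) * indicator B (G x) \<partial>M)
                 = (\<integral>\<^sup>+x. indicator S x * \<psi> (G x) * indicator B (G x) \<partial>M)"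
  shows "AE x in M. x \<in> S \<longrightarrow> \<phi> (G x) = \<psi> (G x)"
proof -
  interpret finite_measure M by fact
  define P where "P = distr (density M (indicator S)) N G"
  have sP[simp]: "sets P = sets N" and spP[simp]: "space P = space N"
    unfolding P_def by auto
  have eP: "emeasure P B = (\<integral>\<^sup>+x. indicator S x * indicator B (G x) \<partial>M)" if "B \<in> sets N" for B
    unfolding P_def using that
    by (simp add: emeasure_distr emeasure_density) (rule nn_integral_cong, auto simp: indicator_def)
  have "emeasure P (space N) \<le> emeasure M (space M)"
    unfolding eP[OF sets.top] by (rule order_trans[OF nn_integral_mono[of _ _ "\<lambda>_. 1"]])
      (auto simp: indicator_def)
  moreover have "emeasure M (space M) < \<top>" using emeasure_finite[of "space M"] top.not_eq_extremum by blast
  ultimately have "emeasure P (space N) < \<top>" by (rule le_less_trans)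
  then have "emeasure P (space P) \<noteq> \<infinity>" by simp
  then interpret P: finite_measure P by (rule finite_measureI)
  have [measurable]: "\<phi> \<in> borel_measurable P" "\<psi> \<in> borel_measurable P" by (simp_all cong: measurable_cong_sets)
  have "density P \<phi> = density P \<psi>"
  proof (rule measure_eqI)
    fix B assume "B \<in> sets (density P \<phi>)"
    then have B[measurable]: "B \<in> sets N" by simp
    have "emeasure (density P \<phi>) B = (\<integral>\<^sup>+x. indicator S x * (\<phi> (G x) * indicator B (G x)) \<partial>M)"
      using B unfolding P_def by (simp add: emeasure_density nn_push)
    also have "\<dots> = (\<integral>\<^sup>+x. indicator S x * (\<psi> (G x) * indicator B (G x)) \<partial>M)"
      using eq[OF B] by (simp add: mult.assoc)
    also have "\<dots> = emeasure (density P \<psi>) B"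
      using B unfolding P_def by (simp add: emeasure_density nn_push)
    finally show "emeasure (density P \<phi>) B = emeasure (density P \<psi>) B" .
  qed simp
  then have "AE y in P. \<phi> y = \<psi> y" by (subst (asm) P.density_unique_iff) auto
  then have "AE x in density M (indicator S). \<phi> (G x) = \<psi> (G x)"
    unfolding P_def by (subst (asm) AE_distr_iff) auto
  then show ?thesis by (subst (asm) AE_density) (auto elim!: eventually_mono simp: indicator_def)
qed

lemma alg_bound:
  fixes nu t :: "'w \<Rightarrow> real" and c m :: real
  assumes F: "finite F" and w: "w \<in> F" and nn: "\<And>w'. w' \<in> F \<Longrightarrow> 0 \<le> nu w'"
    and s1: "(\<Sum>w'\<in>F. nu w') = 1"
    and tb: "\<And>w'. w' \<in> F \<Longrightarrow> 0 < nu w' \<Longrightarrow> - c \<le> t w' \<and> t w' \<le> c"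
    and pos: "0 < nu w" and m: "m = (\<Sum>w'\<in>F. nu w' * t w')"
  shows "(m - c * (1 - nu w)) / nu w \<le> t w \<and> t w \<le> (m + c * (1 - nu w)) / nu w"
proof -
  have r: "(\<Sum>w'\<in>F-{w}. nu w') = 1 - nu w" using s1 sum.remove[OF F w, of nu] by simp
  have m2: "m = nu w * t w + (\<Sum>w'\<in>F-{w}. nu w' * t w')" using m sum.remove[OF F w] by simp
  have up: "(\<Sum>w'\<in>F-{w}. nu w' * t w') \<le> (\<Sum>w'\<in>F-{w}. nu w' * c)"
  proof (rule sum_mono)
    fix w' assume "w' \<in> F - {w}"
    then have "w' \<in> F" by auto
    then show "nu w' * t w' \<le> nu w' * c" using nn[of w'] tb[of w']
      by (cases "nu w' = 0") (auto intro: mult_left_mono)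
  qed
  have lo: "(\<Sum>w'\<in>F-{w}. nu w' * (- c)) \<le> (\<Sum>w'\<in>F-{w}. nu w' * t w')"
  proof (rule sum_mono)
    fix w' assume "w' \<in> F - {w}"
    then have "w' \<in> F" by auto
    then show "nu w' * (- c) \<le> nu w' * t w'" using nn[of w'] tb[of w'] mult_left_mono[of "-c" "t w'" "nu w'"]
      by (cases "nu w' = 0") auto
  qed
  have e1: "(\<Sum>w'\<in>F-{w}. nu w' * c) = c * (1 - nu w)" using r by (simp add: sum_distrib_right[symmetric])
  have e2: "(\<Sum>w'\<in>F-{w}. nu w' * (- c)) = - c * (1 - nu w)" using r sum_distrib_right[of nu "F-{w}" "-c", symmetric] by simp
  have "m - c * (1 - nu w) \<le> nu w * t w" using m2 up e1 by linarith
  moreover have "nu w * t w \<le> m + c * (1 - nu w)" using m2 lo e2 by linarith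
  ultimately show ?thesis using pos by (simp add: pos_divide_le_eq pos_le_divide_eq mult.commute)
qed



lemma ennreal_q_div: "0 < (q::real) \<Longrightarrow> ennreal q * (z / ennreal q) = z"
  by (simp add: ennreal_times_divide mult.commute[of "ennreal q"] mult_divide_eq_ennreal)

lemma em_push:
  fixes h :: "'a \<Rightarrow> ennreal"
  assumes [measurable]: "G \<in> measurable M N" "h \<in> borel_measurable M" "X \<in> sets N"
  shows "emeasure (distr (density M h) N G) X = (\<integral>\<^sup>+x. h x * indicator X (G x) \<partial>M)"
proof -
  have "emeasure (distr (density M h) N G) X = emeasure (density M h) (G -` X \<inter> space M)"
    by (simp add: emeasure_distr)
  also have "\<dots> = (\<integral>\<^sup>+x. h x * indicator (G -` X \<inter> space M) x \<partial>M)"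
    by (rule emeasure_density) auto
  also have "\<dots> = (\<integral>\<^sup>+x. h x * indicator X (G x) \<partial>M)"
    by (rule nn_integral_cong) (auto simp: indicator_def)
  finally show ?thesis .
qed

lemma ennq: "0 < (q::real) \<Longrightarrow> ennreal q * (X * ennreal (1 / q)) = X"
proof -
  assume q: "0 < q"
  have "ennreal q * ennreal (1 / q) = ennreal (q * (1 / q))" using q by (subst ennreal_mult) auto
  also have "\<dots> = 1" using q by simp
  finally have "ennreal q * ennreal (1 / q) = 1" .
  then show ?thesis by (metis mult.assoc mult.commute mult_1)
qed

lemma arm:
  fixes M :: "'a measure" and MV :: "'v measure"
    and V :: "'a \<Rightarrow> 'v" and W :: "'a \<Rightarrow> 'w"
    and E A :: "'a \<Rightarrow> bool" and Y0 Y1 :: "'a \<Rightarrow> real" and a b :: real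
    and mu :: "'v \<Rightarrow> real" and a' :: bool
  assumes prob: "prob_space M"
    and V_meas[measurable]: "V \<in> measurable M MV"
    and W_meas[measurable]: "W \<in> measurable M (count_space UNIV)"
    and E_meas[measurable]: "E \<in> measurable M (count_space UNIV)"
    and A_meas[measurable]: "A \<in> measurable M (count_space UNIV)"
    and Y0_meas[measurable]: "Y0 \<in> borel_measurable M"
    and Y1_meas[measurable]: "Y1 \<in> borel_measurable M"
    and bounded: "AE x in M. a \<le> Y0 x \<and> Y0 x \<le> b \<and> a \<le> Y1 x \<and> Y1 x \<le> b"
    and unc: "\<forall>B\<in>sets (borel :: (real \<times> real) measure). \<forall>p q r.
         cond_prob_version M MV V {x\<in>space M. E x}
             {x\<in>space M. A x = a' \<and> (Y0 x, Y1 x) \<in> B} p \<and>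
         cond_prob_version M MV V {x\<in>space M. E x} {x\<in>space M. A x = a'} q \<and>
         cond_prob_version M MV V {x\<in>space M. E x} {x\<in>space M. (Y0 x, Y1 x) \<in> B} r
         \<longrightarrow> (AE x in M. E x \<longrightarrow> p (V x) = q (V x) * r (V x))"
    and posit: "\<forall>p. cond_prob_version M (MV \<Otimes>\<^sub>M count_space UNIV) (\<lambda>x. (V x, W x))
           {x\<in>space M. E x} {x\<in>space M. A x = a'} p
         \<longrightarrow> (AE x in M. E x \<longrightarrow> p (V x, W x) > 0)"
    and mu: "cond_exp_version M MV V {x\<in>space M. E x \<and> A x = a'}
         (\<lambda>x. if A x then Y1 x else Y0 x) mu"
  shows "AE x in M. E x \<longrightarrow> a \<le> mu (V x)"
    and "\<forall>B\<in>sets MV. (\<integral>\<^sup>+x. indicator {x\<in>space M. E x} x * ennreal ((if a' then Y1 x else Y0 x) - a) * indicator B (V x) \<partial>M)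
          = (\<integral>\<^sup>+x. indicator {x\<in>space M. E x} x * ennreal (mu (V x) - a) * indicator B (V x) \<partial>M)"
proof -
  interpret prob_space M by fact
  have fm: "finite_measure M" by (rule finite_measureI) simp
  define S where "S = {x\<in>space M. E x}"
  define C where "C = {x\<in>space M. A x = a'}"
  define SA where "SA = {x\<in>space M. E x \<and> A x = a'}"
  have S[measurable]: "S \<in> sets M" unfolding S_def by measurable
  have C[measurable]: "C \<in> sets M" unfolding C_def by measurable
  have SA[measurable]: "SA \<in> sets M" unfolding SA_def by measurable
  have SAi: "indicator SA x = (indicator S x * indicator C x :: 'z::semiring_1)" for x
    by (auto simp: indicator_def S_def C_def SA_def)
  have intSC: "integrable M (\<lambda>x. indicator S x * indicator C x :: real)"
    by (rule integrable_const_bound[where B=1]) (auto simp: indicator_def)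
  obtain q where q: "cond_prob_version M MV V S C q" and qnn: "\<And>y. 0 \<le> q y"
    using exists_version[OF fm V_meas S borel_measurable_indicator[OF C] _ intSC]
    unfolding cond_prob_version_def by auto
  have q_meas[measurable]: "q \<in> borel_measurable MV"
    using q unfolding cond_prob_version_def cond_exp_version_def by auto
  obtain p where p: "cond_prob_version M (MV \<Otimes>\<^sub>M count_space UNIV) (\<lambda>x. (V x, W x)) S C p"
    using exists_version[OF fm _ S borel_measurable_indicator[OF C] _ intSC, of "\<lambda>x. (V x, W x)" "MV \<Otimes>\<^sub>M count_space UNIV"]
    unfolding cond_prob_version_def by auto
  have p_meas[measurable]: "p \<in> borel_measurable (MV \<Otimes>\<^sub>M count_space UNIV)"
    using p unfolding cond_prob_version_def cond_exp_version_def by auto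
  have ppos: "AE x in M. E x \<longrightarrow> p (V x, W x) > 0"
    using posit p unfolding S_def C_def by auto
  define Bq where "Bq = {v\<in>space MV. q v \<le> 0}"
  have Bq[measurable]: "Bq \<in> sets MV" unfolding Bq_def by measurable
  have "(\<integral>\<^sup>+x. indicator S x * ennreal (p (V x, W x)) * indicator Bq (fst (V x, W x)) \<partial>M)
      = (\<integral>\<^sup>+x. indicator S x * indicator C x * indicator Bq (fst (V x, W x)) \<partial>M)"
    by (rule key_prob(1)[OF p fm _ S C, symmetric]) measurable
  also have "\<dots> = (\<integral>\<^sup>+x. indicator S x * ennreal (q (V x)) * indicator Bq (V x) \<partial>M)"
    using key_prob(1)[OF q fm V_meas S C, of "indicator Bq"] by simp
  also have "\<dots> = (\<integral>\<^sup>+x. 0 \<partial>M)"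
    by (rule nn_integral_cong) (auto simp: indicator_def Bq_def ennreal_neg)
  also have "\<dots> = 0" by simp
  finally have "AE x in M. indicator S x * ennreal (p (V x, W x)) * indicator Bq (V x) = 0"
    by (subst (asm) nn_integral_0_iff_AE) auto
  with ppos AE_space have qpos: "AE x in M. E x \<longrightarrow> q (V x) > 0"
    by eventually_elim (auto simp: S_def indicator_def Bq_def not_le measurable_space[OF V_meas] split: if_splits)
  define Yv where "Yv x = (if A x then Y1 x else Y0 x)" for x
  have Yv_meas[measurable]: "Yv \<in> borel_measurable M" unfolding Yv_def by measurable
  have "AE x in M. norm (indicator SA x * Yv x) \<le> \<bar>a\<bar> + \<bar>b\<bar>"
    using bounded by eventually_elim (auto simp: indicator_def Yv_def abs_le_iff)
  then have intYv: "integrable M (\<lambda>x. indicator SA x * Yv x)"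
    by (rule integrable_const_bound) measurable
  have mu1: "cond_exp_version M MV V SA Yv mu" using mu unfolding SA_def Yv_def .
  have mu_meas[measurable]: "mu \<in> borel_measurable MV"
    using mu unfolding cond_exp_version_def by auto
  have mu': "cond_exp_version M MV V SA (\<lambda>x. Yv x - a) (\<lambda>y. mu y - a)"
    using cev_affine[OF mu1 fm V_meas SA _ intYv, of 1 "-a"] by simp
  have "AE x in M. norm (indicator SA x * (Yv x - a)) \<le> 2 * \<bar>a\<bar> + \<bar>b\<bar>"
    using bounded by eventually_elim (auto simp: indicator_def Yv_def abs_le_iff)
  then have intYv': "integrable M (\<lambda>x. indicator SA x * (Yv x - a))"
    by (rule integrable_const_bound) measurable
  have Yvpos: "AE x in M. x \<in> SA \<longrightarrow> 0 \<le> Yv x - a"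
    using bounded by eventually_elim (auto simp: Yv_def)
  have mupos: "AE x in M. x \<in> SA \<longrightarrow> 0 \<le> mu (V x) - a"
    by (rule key_nonneg[OF mu' V_meas SA _ Yvpos intYv']) measurable
  define Bm where "Bm = {v\<in>space MV. mu v < a}"
  have Bm[measurable]: "Bm \<in> sets MV" unfolding Bm_def by measurable
  have "(\<integral>\<^sup>+x. indicator S x * ennreal (q (V x)) * indicator Bm (V x) \<partial>M)
      = (\<integral>\<^sup>+x. indicator S x * indicator C x * indicator Bm (V x) \<partial>M)"
    using key_prob(1)[OF q fm V_meas S C, of "indicator Bm"] by simp
  also have "\<dots> = 0"
    apply (subst nn_integral_0_iff_AE)
     apply measurable
    using mupos AE_space
    by eventually_elim (auto simp: indicator_def S_def C_def SA_def Bm_def)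
  finally have "AE x in M. indicator S x * ennreal (q (V x)) * indicator Bm (V x) = 0"
    by (subst (asm) nn_integral_0_iff_AE) auto
  with qpos AE_space show mua: "AE x in M. E x \<longrightarrow> a \<le> mu (V x)"
    by eventually_elim (auto simp: S_def indicator_def Bm_def not_less measurable_space[OF V_meas] split: if_splits)
  define N3 where "N3 = MV \<Otimes>\<^sub>M (borel :: (real \<times> real) measure)"
  define T where "T x = (V x, (Y0 x, Y1 x))" for x
  have T_meas[measurable]: "T \<in> measurable M N3" unfolding T_def N3_def by measurable
  define L where "L = distr (density M (\<lambda>x. indicator S x * indicator C x)) N3 T"
  define R where "R = distr (density M (\<lambda>x. indicator S x * ennreal (q (V x)))) N3 T"
  have LR: "L = R"
  proof (rule measure_eqI_generator_eq_countable[where E="{B \<times> B' | B B'. B \<in> sets MV \<and> B' \<in> sets (borel::(real\<times>real) measure)}" and \<Omega>="space MV \<times> UNIV" and A="{space MV \<times> UNIV}"])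
    show "Int_stable {B \<times> B' | B B'. B \<in> sets MV \<and> B' \<in> sets (borel::(real\<times>real) measure)}"
      by (rule Int_stable_pair_measure_generator)
    show "{B \<times> B' | B B'. B \<in> sets MV \<and> B' \<in> sets (borel::(real\<times>real) measure)} \<subseteq> Pow (space MV \<times> UNIV)"
      using sets.sets_into_space[of _ MV] by auto
    show "sets L = sigma_sets (space MV \<times> UNIV) {B \<times> B' | B B'. B \<in> sets MV \<and> B' \<in> sets (borel::(real\<times>real) measure)}"
      unfolding L_def N3_def by (simp add: sets_pair_measure)
    show "sets R = sigma_sets (space MV \<times> UNIV) {B \<times> B' | B B'. B \<in> sets MV \<and> B' \<in> sets (borel::(real\<times>real) measure)}"
      unfolding R_def N3_def by (simp add: sets_pair_measure)
    show "{space MV \<times> UNIV} \<subseteq> {B \<times> B' | B B'. B \<in> sets MV \<and> B' \<in> sets (borel::(real\<times>real) measure)}"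
    proof -
      have "space MV \<times> UNIV = space MV \<times> UNIV \<and> space MV \<in> sets MV \<and> (UNIV::(real\<times>real) set) \<in> sets borel" by simp
      then show ?thesis by (intro subsetI CollectI exI[of _ "space MV"] exI[of _ "UNIV::(real\<times>real) set"]) simp
    qed
    show "\<Union> {space MV \<times> UNIV} = space MV \<times> UNIV" by simp
    show "countable {space MV \<times> UNIV}" by simp
    have "emeasure L (space MV \<times> UNIV) = (\<integral>\<^sup>+x. indicator S x * indicator C x * indicator (space MV \<times> UNIV) (T x) \<partial>M)"
      unfolding L_def by (rule em_push[OF T_meas]) (auto simp: N3_def)
    also have "\<dots> \<le> (\<integral>\<^sup>+x. 1 \<partial>M)"
      by (rule nn_integral_mono) (auto simp: indicator_def)
    also have "\<dots> = 1" by (simp add: emeasure_space_1)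
    finally show "\<And>a. a \<in> {space MV \<times> UNIV} \<Longrightarrow> emeasure L a \<noteq> \<infinity>"
      by (auto simp: top_unique)
  next
    fix X assume "X \<in> {B \<times> B' | B B'. B \<in> sets MV \<and> B' \<in> sets (borel::(real\<times>real) measure)}"
    then obtain B B' where X: "X = B \<times> B'" and B[measurable]: "B \<in> sets MV" and B'[measurable]: "B' \<in> sets (borel::(real\<times>real) measure)"
      by auto
    define D where "D = {x\<in>space M. A x = a' \<and> (Y0 x, Y1 x) \<in> B'}"
    define CB where "CB = {x\<in>space M. (Y0 x, Y1 x) \<in> B'}"
    have D[measurable]: "D \<in> sets M" unfolding D_def by measurable
    have CB[measurable]: "CB \<in> sets M" unfolding CB_def by measurable
    have intSD: "integrable M (\<lambda>x. indicator S x * indicator D x :: real)"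
      by (rule integrable_const_bound[where B=1]) (auto simp: indicator_def)
    have intSCB: "integrable M (\<lambda>x. indicator S x * indicator CB x :: real)"
      by (rule integrable_const_bound[where B=1]) (auto simp: indicator_def)
    obtain pp where pp: "cond_prob_version M MV V S D pp" and ppnn: "\<And>y. 0 \<le> pp y"
      using exists_version[OF fm V_meas S borel_measurable_indicator[OF D] _ intSD]
      unfolding cond_prob_version_def by auto
    obtain r where r: "cond_prob_version M MV V S CB r" and rnn: "\<And>y. 0 \<le> r y"
      using exists_version[OF fm V_meas S borel_measurable_indicator[OF CB] _ intSCB]
      unfolding cond_prob_version_def by auto
    have r_meas[measurable]: "r \<in> borel_measurable MV"
      using r unfolding cond_prob_version_def cond_exp_version_def by auto
    have ueq: "AE x in M. E x \<longrightarrow> pp (V x) = q (V x) * r (V x)"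
      apply (rule unc[rule_format, OF B'])
      using pp q r unfolding S_def C_def D_def CB_def by auto
    have "emeasure L X = (\<integral>\<^sup>+x. indicator S x * indicator C x * indicator X (T x) \<partial>M)"
      unfolding L_def X by (rule em_push[OF T_meas]) (auto simp: N3_def)
    also have "\<dots> = (\<integral>\<^sup>+x. indicator S x * indicator D x * indicator B (V x) \<partial>M)"
      by (rule nn_integral_cong) (auto simp: indicator_def X T_def C_def D_def)
    also have "\<dots> = (\<integral>\<^sup>+x. indicator S x * ennreal (pp (V x)) * indicator B (V x) \<partial>M)"
      using key_prob(1)[OF pp fm V_meas S D, of "indicator B"] by simp
    also have "\<dots> = (\<integral>\<^sup>+x. indicator S x * ennreal (r (V x)) * (ennreal (q (V x)) * indicator B (V x)) \<partial>M)"
      by (rule nn_integral_cong_AE) (use ueq in \<open>auto elim!: eventually_mono simp: S_def indicator_def ennreal_mult qnn rnn mult.commute\<close>)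
    also have "\<dots> = (\<integral>\<^sup>+x. indicator S x * indicator CB x * (ennreal (q (V x)) * indicator B (V x)) \<partial>M)"
      using key_prob(1)[OF r fm V_meas S CB, of "\<lambda>v. ennreal (q v) * indicator B v"] by simp
    also have "\<dots> = (\<integral>\<^sup>+x. indicator S x * ennreal (q (V x)) * indicator X (T x) \<partial>M)"
      by (rule nn_integral_cong) (auto simp: indicator_def X T_def CB_def)
    also have "\<dots> = emeasure R X"
      unfolding R_def X by (rule em_push[OF T_meas, symmetric]) (auto simp: N3_def)
    finally show "emeasure L X = emeasure R X" .
  qed
  have joint: "(\<integral>\<^sup>+x. indicator S x * indicator C x * k (T x) \<partial>M) = (\<integral>\<^sup>+x. indicator S x * ennreal (q (V x)) * k (T x) \<partial>M)"
    if k[measurable]: "k \<in> borel_measurable N3" for k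
  proof -
    have "(\<integral>\<^sup>+y. k y \<partial>L) = (\<integral>\<^sup>+y. k y \<partial>R)" using LR by simp
    then show ?thesis unfolding L_def R_def by (simp add: nn_push)
  qed
  have joint: "(\<integral>\<^sup>+x. indicator S x * indicator C x * k (T x) \<partial>M) = (\<integral>\<^sup>+x. indicator S x * ennreal (q (V x)) * k (T x) \<partial>M)"
    if k[measurable]: "k \<in> borel_measurable N3" for k
  proof -
    have "(\<integral>\<^sup>+y. k y \<partial>L) = (\<integral>\<^sup>+y. k y \<partial>R)" using LR by simp
    then show ?thesis unfolding L_def R_def by (simp add: nn_push)
  qed
  define qi where "qi v = (if 0 < q v then 1 / q v else 0)" for v
  have qi_meas[measurable]: "qi \<in> borel_measurable MV" unfolding qi_def by measurable
  show "\<forall>B\<in>sets MV. (\<integral>\<^sup>+x. indicator {x\<in>space M. E x} x * ennreal ((if a' then Y1 x else Y0 x) - a) * indicator B (V x) \<partial>M)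
          = (\<integral>\<^sup>+x. indicator {x\<in>space M. E x} x * ennreal (mu (V x) - a) * indicator B (V x) \<partial>M)"
  proof
    fix B assume B[measurable]: "B \<in> sets MV"
    define yf where "yf y = (if a' then snd y else fst y) - a" for y :: "real \<times> real"
    have yf[measurable]: "yf \<in> borel_measurable borel"
    proof -
      have "continuous_on UNIV yf" unfolding yf_def by (cases a') (auto intro!: continuous_intros)
      then show ?thesis by (rule borel_measurable_continuous_onI)
    qed
    define k3 where "k3 z = indicator B (fst z) * ennreal (yf (snd z)) * ennreal (qi (fst z))" for z :: "'v \<times> real \<times> real"
    have k3[measurable]: "k3 \<in> borel_measurable N3" unfolding k3_def N3_def by measurable
    have "(\<integral>\<^sup>+x. indicator S x * ennreal ((if a' then Y1 x else Y0 x) - a) * indicator B (V x) \<partial>M)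
        = (\<integral>\<^sup>+x. indicator S x * ennreal (q (V x)) * k3 (T x) \<partial>M)"
      by (rule nn_integral_cong_AE) (use qpos in \<open>auto elim!: eventually_mono simp: S_def indicator_def k3_def T_def qi_def yf_def ennq mult.assoc\<close>)
    also have "\<dots> = (\<integral>\<^sup>+x. indicator S x * indicator C x * k3 (T x) \<partial>M)"
      by (rule joint[OF k3, symmetric])
    also have "\<dots> = (\<integral>\<^sup>+x. indicator SA x * ennreal (Yv x - a) * (indicator B (V x) * ennreal (qi (V x))) \<partial>M)"
      by (rule nn_integral_cong) (auto simp: S_def C_def SA_def indicator_def k3_def T_def Yv_def yf_def)
    also have "\<dots> = (\<integral>\<^sup>+x. indicator SA x * ennreal (mu (V x) - a) * (indicator B (V x) * ennreal (qi (V x))) \<partial>M)"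
      by (rule key_nn[OF mu' V_meas SA _ Yvpos intYv']) measurable
    also have "\<dots> = (\<integral>\<^sup>+x. indicator S x * indicator C x * (ennreal (mu (V x) - a) * indicator B (V x) * ennreal (qi (V x))) \<partial>M)"
      by (rule nn_integral_cong) (auto simp: S_def C_def SA_def indicator_def)
    also have "\<dots> = (\<integral>\<^sup>+x. indicator S x * ennreal (q (V x)) * (ennreal (mu (V x) - a) * indicator B (V x) * ennreal (qi (V x))) \<partial>M)"
      by (rule key_prob(1)[OF q fm V_meas S C]) measurable
    also have "\<dots> = (\<integral>\<^sup>+x. indicator S x * ennreal (mu (V x) - a) * indicator B (V x) \<partial>M)"
      by (rule nn_integral_cong_AE) (use qpos in \<open>auto elim!: eventually_mono simp: S_def indicator_def qi_def ennq mult.assoc\<close>)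
    finally show "(\<integral>\<^sup>+x. indicator {x\<in>space M. E x} x * ennreal ((if a' then Y1 x else Y0 x) - a) * indicator B (V x) \<partial>M)
          = (\<integral>\<^sup>+x. indicator {x\<in>space M. E x} x * ennreal (mu (V x) - a) * indicator B (V x) \<partial>M)"
      unfolding S_def .
  qed
qed



lemma pointwise:
  fixes nu t :: "'w \<Rightarrow> real" and a b c m0 m1 :: real
  assumes F: "finite F" and w: "w \<in> F" and nn: "\<forall>w\<in>F. 0 \<le> nu w"
    and tb: "\<forall>w\<in>F. 0 < nu w \<longrightarrow> - c \<le> t w \<and> t w \<le> c"
    and c: "c = b - a" "a < b"
    and hsum: "(\<Sum>w\<in>F. ennreal (nu w)) = 1"
    and hD: "(\<Sum>w\<in>F. ennreal (nu w) * ennreal (t w + c)) + ennreal (m0 - a) = ennreal (m1 - a) + ennreal c"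
    and m0: "a \<le> m0" and m1: "a \<le> m1" and pos: "0 < nu w"
  shows "gamma_l a b m1 m0 (nu w) \<le> t w \<and> t w \<le> gamma_u a b m1 m0 (nu w)"
proof -
  have s1: "(\<Sum>w\<in>F. nu w) = 1" using hsum nn by (subst (asm) sum_ennreal) auto
  have trm: "ennreal (nu v) * ennreal (t v + c) = ennreal (nu v * (t v + c))" and tnn: "0 \<le> nu v * (t v + c)"
    if "v \<in> F" for v
  proof -
    have "0 \<le> nu v" "0 < nu v \<longrightarrow> 0 \<le> t v + c" using nn tb that by auto
    then show "0 \<le> nu v * (t v + c)"
      by (cases "nu v = 0") auto
    show "ennreal (nu v) * ennreal (t v + c) = ennreal (nu v * (t v + c))"
      using \<open>0 \<le> nu v\<close> \<open>0 < nu v \<longrightarrow> 0 \<le> t v + c\<close> by (cases "nu v = 0") (auto simp: ennreal_mult)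
  qed
  have "(\<Sum>w\<in>F. ennreal (nu w) * ennreal (t w + c)) = ennreal (\<Sum>w\<in>F. nu w * (t w + c))"
    using trm tnn by (simp add: sum_ennreal)
  moreover have "ennreal ((\<Sum>w\<in>F. nu w * (t w + c)) + (m0 - a)) = ennreal (\<Sum>w\<in>F. nu w * (t w + c)) + ennreal (m0 - a)"
    using m0 tnn by (intro ennreal_plus sum_nonneg) auto
  moreover have "ennreal ((m1 - a) + c) = ennreal (m1 - a) + ennreal c"
    using m1 c by (intro ennreal_plus) auto
  ultimately have "ennreal ((\<Sum>w\<in>F. nu w * (t w + c)) + (m0 - a)) = ennreal ((m1 - a) + c)"
    using hD by simp
  then have "(\<Sum>w\<in>F. nu w * (t w + c)) + (m0 - a) = (m1 - a) + c"
    using m0 m1 c tnn by (subst (asm) ennreal_inj) (auto intro!: add_nonneg_nonneg sum_nonneg)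
  moreover have "(\<Sum>w\<in>F. nu w * (t w + c)) = (\<Sum>w\<in>F. nu w * t w) + c"
  proof -
    have "(\<Sum>w\<in>F. nu w * (t w + c)) = (\<Sum>w\<in>F. nu w * t w) + (\<Sum>w\<in>F. nu w) * c"
      by (simp add: algebra_simps sum.distrib sum_distrib_left)
    then show ?thesis using s1 by simp
  qed
  ultimately have m: "m1 - m0 = (\<Sum>w\<in>F. nu w * t w)" by simp
  have "(m1 - m0 - c * (1 - nu w)) / nu w \<le> t w \<and> t w \<le> (m1 - m0 + c * (1 - nu w)) / nu w"
    by (rule alg_bound[OF F w _ s1 _ pos m]) (use nn tb in auto)
  moreover have "- c \<le> t w \<and> t w \<le> c" using tb w pos by auto
  ultimately show ?thesis using c unfolding gamma_l_def gamma_u_def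
    by (auto simp: algebra_simps)
qed

theorem theorem1:
  fixes M :: "'a measure" and MV :: "'v measure"
    and V :: "'a \<Rightarrow> 'v" and W :: "'a \<Rightarrow> 'w"
    and E A :: "'a \<Rightarrow> bool" and Y0 Y1 :: "'a \<Rightarrow> real" and a b :: real
    and mu1 mu0 :: "'v \<Rightarrow> real" and nu :: "'v \<Rightarrow> 'w \<Rightarrow> real"
    and tau :: "'v \<times> 'w \<Rightarrow> real"
  assumes prob: "prob_space M"
    and V_meas: "V \<in> measurable M MV"
    and W_meas: "W \<in> measurable M (count_space UNIV)"
    and W_fin: "finite (W ` space M)"
    and E_meas: "E \<in> measurable M (count_space UNIV)"
    and A_meas: "A \<in> measurable M (count_space UNIV)"
    and Y0_meas: "Y0 \<in> borel_measurable M"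
    and Y1_meas: "Y1 \<in> borel_measurable M"
    and ab: "a < b"
    and bounded: "AE x in M. a \<le> Y0 x \<and> Y0 x \<le> b \<and> a \<le> Y1 x \<and> Y1 x \<le> b"
    and unconfounded:
      "\<forall>a'::bool. \<forall>B\<in>sets (borel :: (real \<times> real) measure). \<forall>p q r.
         cond_prob_version M MV V {x\<in>space M. E x}
             {x\<in>space M. A x = a' \<and> (Y0 x, Y1 x) \<in> B} p \<and>
         cond_prob_version M MV V {x\<in>space M. E x} {x\<in>space M. A x = a'} q \<and>
         cond_prob_version M MV V {x\<in>space M. E x} {x\<in>space M. (Y0 x, Y1 x) \<in> B} r
         \<longrightarrow> (AE x in M. E x \<longrightarrow> p (V x) = q (V x) * r (V x))"
    and positivity:
      "\<forall>a'::bool. \<forall>p. cond_prob_version M (MV \<Otimes>\<^sub>M count_space UNIV) (\<lambda>x. (V x, W x))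
           {x\<in>space M. E x} {x\<in>space M. A x = a'} p
         \<longrightarrow> (AE x in M. E x \<longrightarrow> p (V x, W x) > 0)"
    and nu_def:
      "\<forall>w. cond_prob_version M MV V {x\<in>space M. \<not> E x} {x\<in>space M. W x = w} (\<lambda>v. nu v w)"
    and transport1:
      "\<forall>w. cond_prob_version M MV V {x\<in>space M. E x} {x\<in>space M. W x = w} (\<lambda>v. nu v w)"
    and transport2:
      "\<exists>t. cond_exp_version M (MV \<Otimes>\<^sub>M count_space UNIV) (\<lambda>x. (V x, W x))
              {x\<in>space M. E x} (\<lambda>x. Y1 x - Y0 x) t \<and>
           cond_exp_version M (MV \<Otimes>\<^sub>M count_space UNIV) (\<lambda>x. (V x, W x))
              {x\<in>space M. \<not> E x} (\<lambda>x. Y1 x - Y0 x) t"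
    and mu1_def:
      "cond_exp_version M MV V {x\<in>space M. E x \<and> A x}
         (\<lambda>x. if A x then Y1 x else Y0 x) mu1"
    and mu0_def:
      "cond_exp_version M MV V {x\<in>space M. E x \<and> \<not> A x}
         (\<lambda>x. if A x then Y1 x else Y0 x) mu0"
    and tau_def:
      "cond_exp_version M (MV \<Otimes>\<^sub>M count_space UNIV) (\<lambda>x. (V x, W x))
         {x\<in>space M. E x} (\<lambda>x. Y1 x - Y0 x) tau"
  shows "AE x in M. E x \<longrightarrow> (\<forall>w\<in>W ` space M. nu (V x) w > 0 \<longrightarrow>
           gamma_l a b (mu1 (V x)) (mu0 (V x)) (nu (V x) w) \<le> tau (V x, w) \<and>
           tau (V x, w) \<le> gamma_u a b (mu1 (V x)) (mu0 (V x)) (nu (V x) w))"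
proof -
  interpret prob_space M by (rule prob)
  have fm: "finite_measure M" by (rule finite_measureI) simp
  note [measurable] = V_meas W_meas E_meas A_meas Y0_meas Y1_meas
  define S where "S = {x\<in>space M. E x}"
  define Wf where "Wf = W ` space M"
  define c where "c = b - a"
  define N2 where "N2 = MV \<Otimes>\<^sub>M (count_space UNIV :: 'w measure)"
  have S[measurable]: "S \<in> sets M" unfolding S_def by measurable
  have G2[measurable]: "(\<lambda>x. (V x, W x)) \<in> measurable M N2" unfolding N2_def by measurable
  have cpos: "0 < c" using ab by (simp add: c_def)
  have unc1: "\<forall>B\<in>sets (borel :: (real \<times> real) measure). \<forall>p q r.
         cond_prob_version M MV V {x\<in>space M. E x}
             {x\<in>space M. A x = True \<and> (Y0 x, Y1 x) \<in> B} p \<and>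
         cond_prob_version M MV V {x\<in>space M. E x} {x\<in>space M. A x = True} q \<and>
         cond_prob_version M MV V {x\<in>space M. E x} {x\<in>space M. (Y0 x, Y1 x) \<in> B} r
         \<longrightarrow> (AE x in M. E x \<longrightarrow> p (V x) = q (V x) * r (V x))"
    using unconfounded by blast
  have unc0: "\<forall>B\<in>sets (borel :: (real \<times> real) measure). \<forall>p q r.
         cond_prob_version M MV V {x\<in>space M. E x}
             {x\<in>space M. A x = False \<and> (Y0 x, Y1 x) \<in> B} p \<and>
         cond_prob_version M MV V {x\<in>space M. E x} {x\<in>space M. A x = False} q \<and>
         cond_prob_version M MV V {x\<in>space M. E x} {x\<in>space M. (Y0 x, Y1 x) \<in> B} r
         \<longrightarrow> (AE x in M. E x \<longrightarrow> p (V x) = q (V x) * r (V x))"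
    using unconfounded by blast
  have pos1: "\<forall>p. cond_prob_version M (MV \<Otimes>\<^sub>M count_space UNIV) (\<lambda>x. (V x, W x))
           {x\<in>space M. E x} {x\<in>space M. A x = True} p
         \<longrightarrow> (AE x in M. E x \<longrightarrow> p (V x, W x) > 0)" using positivity by blast
  have pos0: "\<forall>p. cond_prob_version M (MV \<Otimes>\<^sub>M count_space UNIV) (\<lambda>x. (V x, W x))
           {x\<in>space M. E x} {x\<in>space M. A x = False} p
         \<longrightarrow> (AE x in M. E x \<longrightarrow> p (V x, W x) > 0)" using positivity by blast
  have mu1': "cond_exp_version M MV V {x\<in>space M. E x \<and> A x = True}
         (\<lambda>x. if A x then Y1 x else Y0 x) mu1" using mu1_def by simp
  have mu0': "cond_exp_version M MV V {x\<in>space M. E x \<and> A x = False}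
         (\<lambda>x. if A x then Y1 x else Y0 x) mu0" using mu0_def by simp
  note arm1 = arm[OF prob V_meas W_meas E_meas A_meas Y0_meas Y1_meas bounded unc1 pos1 mu1']
  note arm0 = arm[OF prob V_meas W_meas E_meas A_meas Y0_meas Y1_meas bounded unc0 pos0 mu0']
  have mu1a: "AE x in M. E x \<longrightarrow> a \<le> mu1 (V x)" by (rule arm1(1))
  have mu0a: "AE x in M. E x \<longrightarrow> a \<le> mu0 (V x)" by (rule arm0(1))
  have ver1: "\<And>B. B \<in> sets MV \<Longrightarrow> (\<integral>\<^sup>+x. indicator S x * ennreal (Y1 x - a) * indicator B (V x) \<partial>M)
          = (\<integral>\<^sup>+x. indicator S x * ennreal (mu1 (V x) - a) * indicator B (V x) \<partial>M)"
    using arm1(2) unfolding S_def by simp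
  have ver0: "\<And>B. B \<in> sets MV \<Longrightarrow> (\<integral>\<^sup>+x. indicator S x * ennreal (Y0 x - a) * indicator B (V x) \<partial>M)
          = (\<integral>\<^sup>+x. indicator S x * ennreal (mu0 (V x) - a) * indicator B (V x) \<partial>M)"
    using arm0(2) unfolding S_def by simp
  have mu1_meas[measurable]: "mu1 \<in> borel_measurable MV" using mu1_def unfolding cond_exp_version_def by auto
  have mu0_meas[measurable]: "mu0 \<in> borel_measurable MV" using mu0_def unfolding cond_exp_version_def by auto
  have tau: "cond_exp_version M N2 (\<lambda>x. (V x, W x)) S (\<lambda>x. Y1 x - Y0 x) tau"
    using tau_def unfolding N2_def S_def .
  have tau_meas[measurable]: "tau \<in> borel_measurable N2"
    using tau unfolding cond_exp_version_def by auto
  have "AE x in M. norm (indicator S x * (Y1 x - Y0 x)) \<le> 2 * (\<bar>a\<bar> + \<bar>b\<bar>)"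
    using bounded by eventually_elim (auto simp: indicator_def abs_le_iff)
  then have intD: "integrable M (\<lambda>x. indicator S x * (Y1 x - Y0 x))"
    by (rule integrable_const_bound) measurable
  have tauP: "cond_exp_version M N2 (\<lambda>x. (V x, W x)) S (\<lambda>x. 1 * (Y1 x - Y0 x) + c) (\<lambda>y. 1 * tau y + c)"
    by (rule cev_affine[OF tau fm G2 S _ intD]) measurable
  have tauN: "cond_exp_version M N2 (\<lambda>x. (V x, W x)) S (\<lambda>x. (-1) * (Y1 x - Y0 x) + c) (\<lambda>y. (-1) * tau y + c)"
    by (rule cev_affine[OF tau fm G2 S _ intD]) measurable
  have "AE x in M. norm (indicator S x * (1 * (Y1 x - Y0 x) + c)) \<le> 4 * (\<bar>a\<bar> + \<bar>b\<bar>)"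
    using bounded by eventually_elim (auto simp: indicator_def abs_le_iff c_def)
  then have intP: "integrable M (\<lambda>x. indicator S x * (1 * (Y1 x - Y0 x) + c))"
    by (rule integrable_const_bound) measurable
  have "AE x in M. norm (indicator S x * ((-1) * (Y1 x - Y0 x) + c)) \<le> 4 * (\<bar>a\<bar> + \<bar>b\<bar>)"
    using bounded by eventually_elim (auto simp: indicator_def abs_le_iff c_def)
  then have intN: "integrable M (\<lambda>x. indicator S x * ((-1) * (Y1 x - Y0 x) + c))"
    by (rule integrable_const_bound) measurable
  have posP: "AE x in M. x \<in> S \<longrightarrow> 0 \<le> 1 * (Y1 x - Y0 x) + c"
    using bounded by eventually_elim (auto simp: c_def)
  have posN: "AE x in M. x \<in> S \<longrightarrow> 0 \<le> (-1) * (Y1 x - Y0 x) + c"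
    using bounded by eventually_elim (auto simp: c_def)
  have tau_lo: "AE x in M. x \<in> S \<longrightarrow> 0 \<le> 1 * tau (V x, W x) + c"
    by (rule key_nonneg[OF tauP G2 S _ posP intP]) measurable
  have tau_hi: "AE x in M. x \<in> S \<longrightarrow> 0 \<le> (-1) * tau (V x, W x) + c"
    by (rule key_nonneg[OF tauN G2 S _ posN intN]) measurable
  define Cw where "Cw w = {x\<in>space M. W x = w}" for w
  have Cw[measurable]: "Cw w \<in> sets M" for w unfolding Cw_def by measurable
  have nuv: "cond_prob_version M MV V S (Cw w) (\<lambda>v. nu v w)" for w
    using transport1 unfolding S_def Cw_def by blast
  have nu_meas[measurable]: "(\<lambda>v. nu v w) \<in> borel_measurable MV" for w
    using nuv[of w] unfolding cond_prob_version_def cond_exp_version_def by auto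
  have nu_meas2[measurable]: "(\<lambda>v. nu v w) \<in> borel_measurable MV" for w by simp
  have nunn: "AE x in M. x \<in> S \<longrightarrow> 0 \<le> nu (V x) w" for w
    using key_prob(2)[OF nuv[of w] fm V_meas S Cw, of "\<lambda>_. 1"] by simp
  have nukey: "(\<integral>\<^sup>+x. indicator S x * indicator (Cw w) x * k (V x) \<partial>M) = (\<integral>\<^sup>+x. indicator S x * ennreal (nu (V x) w) * k (V x) \<partial>M)"
    if [measurable]: "k \<in> borel_measurable MV" for w k
    by (rule key_prob(1)[OF nuv[of w] fm V_meas S Cw]) measurable
  have finWf: "finite Wf" using W_fin unfolding Wf_def .
  have decomp: "indicator S x * F (W x) = (\<Sum>w\<in>Wf. indicator S x * indicator (Cw w) x * F w)"
    if "x \<in> space M" for x and F :: "'w \<Rightarrow> ennreal"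
  proof -
    have "(\<Sum>w\<in>Wf. indicator S x * indicator (Cw w) x * F w) = (\<Sum>w\<in>Wf. if W x = w then indicator S x * F w else 0)"
      by (rule sum.cong) (auto simp: Cw_def indicator_def that)
    also have "\<dots> = indicator S x * F (W x)" using finWf that by (simp add: sum.delta Wf_def)
    finally show ?thesis by simp
  qed
  have tauw[measurable]: "(\<lambda>v. tau (v, w)) \<in> borel_measurable MV" for w
  proof -
    have "(\<lambda>v. (v, w)) \<in> measurable MV N2" unfolding N2_def by measurable
    then show ?thesis by (rule measurable_compose[OF _ tau_meas])
  qed
  define Phi where "Phi v = (\<Sum>w\<in>Wf. ennreal (nu v w) * ennreal (tau (v, w) + c))" for v
  have Phi_meas[measurable]: "Phi \<in> borel_measurable MV" unfolding Phi_def N2_def by measurable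
  have Dst: "(\<integral>\<^sup>+x. indicator S x * ennreal (Y1 x - Y0 x + c) * indicator B (V x) \<partial>M)
      = (\<integral>\<^sup>+x. indicator S x * Phi (V x) * indicator B (V x) \<partial>M)" if B[measurable]: "B \<in> sets MV" for B
  proof -
    have "(\<integral>\<^sup>+x. indicator S x * ennreal (1 * (Y1 x - Y0 x) + c) * indicator B (fst (V x, W x)) \<partial>M)
       = (\<integral>\<^sup>+x. indicator S x * ennreal (1 * tau (V x, W x) + c) * indicator B (fst (V x, W x)) \<partial>M)"
      by (rule key_nn[OF tauP G2 S _ posP intP]) (unfold N2_def, measurable)
    then have "(\<integral>\<^sup>+x. indicator S x * ennreal (Y1 x - Y0 x + c) * indicator B (V x) \<partial>M)
       = (\<integral>\<^sup>+x. indicator S x * ennreal (tau (V x, W x) + c) * indicator B (V x) \<partial>M)" by simp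
    also have "\<dots> = (\<integral>\<^sup>+x. (\<Sum>w\<in>Wf. indicator S x * indicator (Cw w) x * (ennreal (tau (V x, w) + c) * indicator B (V x))) \<partial>M)"
    proof (rule nn_integral_cong)
      fix x assume x: "x \<in> space M"
      show "indicator S x * ennreal (tau (V x, W x) + c) * indicator B (V x) = (\<Sum>w\<in>Wf. indicator S x * indicator (Cw w) x * (ennreal (tau (V x, w) + c) * indicator B (V x)))"
        using decomp[OF x, of "\<lambda>w. ennreal (tau (V x, w) + c) * indicator B (V x)"] by (simp add: mult.assoc)
    qed
    also have "\<dots> = (\<Sum>w\<in>Wf. \<integral>\<^sup>+x. indicator S x * indicator (Cw w) x * (ennreal (tau (V x, w) + c) * indicator B (V x)) \<partial>M)"
      by (rule nn_integral_sum) (simp add: N2_def)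
    also have "\<dots> = (\<Sum>w\<in>Wf. \<integral>\<^sup>+x. indicator S x * ennreal (nu (V x) w) * (ennreal (tau (V x, w) + c) * indicator B (V x)) \<partial>M)"
      by (rule sum.cong[OF refl], rule nukey) measurable
    also have "\<dots> = (\<integral>\<^sup>+x. (\<Sum>w\<in>Wf. indicator S x * ennreal (nu (V x) w) * (ennreal (tau (V x, w) + c) * indicator B (V x))) \<partial>M)"
      by (rule nn_integral_sum[symmetric]) (simp add: N2_def)
    also have "\<dots> = (\<integral>\<^sup>+x. indicator S x * Phi (V x) * indicator B (V x) \<partial>M)"
      by (rule nn_integral_cong) (simp add: Phi_def sum_distrib_left sum_distrib_right mult.assoc mult.left_commute)
    finally show ?thesis .
  qed
  have Dfact: "AE x in M. x \<in> S \<longrightarrow> Phi (V x) + ennreal (mu0 (V x) - a) = ennreal (mu1 (V x) - a) + ennreal c"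
  proof (rule uniq_nn[OF fm V_meas S])
    fix B assume B[measurable]: "B \<in> sets MV"
    have ae: "AE x in M. indicator S x * ennreal (Y1 x - Y0 x + c) * indicator B (V x) + indicator S x * ennreal (Y0 x - a) * indicator B (V x)
        = indicator S x * ennreal (Y1 x - a) * indicator B (V x) + indicator S x * ennreal c * indicator B (V x)"
    proof (rule eventually_mono[OF bounded])
      fix x assume bx: "a \<le> Y0 x \<and> Y0 x \<le> b \<and> a \<le> Y1 x \<and> Y1 x \<le> b"
      have "ennreal (Y1 x - Y0 x + c) + ennreal (Y0 x - a) = ennreal ((Y1 x - Y0 x + c) + (Y0 x - a))"
        using bx by (intro ennreal_plus[symmetric]) (auto simp: c_def)
      also have "\<dots> = ennreal ((Y1 x - a) + c)" by (simp add: algebra_simps)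
      also have "\<dots> = ennreal (Y1 x - a) + ennreal c"
        using bx cpos by (intro ennreal_plus) auto
      finally show "indicator S x * ennreal (Y1 x - Y0 x + c) * indicator B (V x) + indicator S x * ennreal (Y0 x - a) * indicator B (V x)
        = indicator S x * ennreal (Y1 x - a) * indicator B (V x) + indicator S x * ennreal c * indicator B (V x)"
        by (simp add: distrib_left[symmetric] distrib_right[symmetric])
    qed
    have "(\<integral>\<^sup>+x. indicator S x * (Phi (V x) + ennreal (mu0 (V x) - a)) * indicator B (V x) \<partial>M)
        = (\<integral>\<^sup>+x. indicator S x * Phi (V x) * indicator B (V x) + indicator S x * ennreal (mu0 (V x) - a) * indicator B (V x) \<partial>M)"
      by (rule nn_integral_cong) (simp add: distrib_left distrib_right)
    also have "\<dots> = (\<integral>\<^sup>+x. indicator S x * Phi (V x) * indicator B (V x) \<partial>M) + (\<integral>\<^sup>+x. indicator S x * ennreal (mu0 (V x) - a) * indicator B (V x) \<partial>M)"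
      by (rule nn_integral_add) measurable
    also have "\<dots> = (\<integral>\<^sup>+x. indicator S x * ennreal (Y1 x - Y0 x + c) * indicator B (V x) \<partial>M) + (\<integral>\<^sup>+x. indicator S x * ennreal (Y0 x - a) * indicator B (V x) \<partial>M)"
      using Dst[OF B] ver0[OF B] by simp
    also have "\<dots> = (\<integral>\<^sup>+x. indicator S x * ennreal (Y1 x - Y0 x + c) * indicator B (V x) + indicator S x * ennreal (Y0 x - a) * indicator B (V x) \<partial>M)"
      by (rule nn_integral_add[symmetric]) measurable
    also have "\<dots> = (\<integral>\<^sup>+x. indicator S x * ennreal (Y1 x - a) * indicator B (V x) + indicator S x * ennreal c * indicator B (V x) \<partial>M)"
      by (rule nn_integral_cong_AE[OF ae])
    also have "\<dots> = (\<integral>\<^sup>+x. indicator S x * ennreal (Y1 x - a) * indicator B (V x) \<partial>M) + (\<integral>\<^sup>+x. indicator S x * ennreal c * indicator B (V x) \<partial>M)"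
      by (rule nn_integral_add) measurable
    also have "\<dots> = (\<integral>\<^sup>+x. indicator S x * ennreal (mu1 (V x) - a) * indicator B (V x) \<partial>M) + (\<integral>\<^sup>+x. indicator S x * ennreal c * indicator B (V x) \<partial>M)"
      using ver1[OF B] by simp
    also have "\<dots> = (\<integral>\<^sup>+x. indicator S x * ennreal (mu1 (V x) - a) * indicator B (V x) + indicator S x * ennreal c * indicator B (V x) \<partial>M)"
      by (rule nn_integral_add[symmetric]) measurable
    also have "\<dots> = (\<integral>\<^sup>+x. indicator S x * (ennreal (mu1 (V x) - a) + ennreal c) * indicator B (V x) \<partial>M)"
      by (rule nn_integral_cong) (simp add: distrib_left distrib_right)
    finally show "(\<integral>\<^sup>+x. indicator S x * (Phi (V x) + ennreal (mu0 (V x) - a)) * indicator B (V x) \<partial>M)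
        = (\<integral>\<^sup>+x. indicator S x * (ennreal (mu1 (V x) - a) + ennreal c) * indicator B (V x) \<partial>M)" .
  qed measurable
  have Sumfact: "AE x in M. x \<in> S \<longrightarrow> (\<Sum>w\<in>Wf. ennreal (nu (V x) w)) = 1"
  proof (rule uniq_nn[OF fm V_meas S])
    fix B assume B[measurable]: "B \<in> sets MV"
    have "(\<integral>\<^sup>+x. indicator S x * (\<Sum>w\<in>Wf. ennreal (nu (V x) w)) * indicator B (V x) \<partial>M)
        = (\<integral>\<^sup>+x. (\<Sum>w\<in>Wf. indicator S x * ennreal (nu (V x) w) * indicator B (V x)) \<partial>M)"
      by (rule nn_integral_cong) (simp add: sum_distrib_left sum_distrib_right)
    also have "\<dots> = (\<Sum>w\<in>Wf. \<integral>\<^sup>+x. indicator S x * ennreal (nu (V x) w) * indicator B (V x) \<partial>M)"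
      by (rule nn_integral_sum) measurable
    also have "\<dots> = (\<Sum>w\<in>Wf. \<integral>\<^sup>+x. indicator S x * indicator (Cw w) x * indicator B (V x) \<partial>M)"
      by (rule sum.cong[OF refl], rule nukey[symmetric]) measurable
    also have "\<dots> = (\<integral>\<^sup>+x. (\<Sum>w\<in>Wf. indicator S x * indicator (Cw w) x * indicator B (V x)) \<partial>M)"
      by (rule nn_integral_sum[symmetric]) measurable
    also have "\<dots> = (\<integral>\<^sup>+x. indicator S x * 1 * indicator B (V x) \<partial>M)"
    proof (rule nn_integral_cong)
      fix x assume x: "x \<in> space M"
      show "(\<Sum>w\<in>Wf. indicator S x * indicator (Cw w) x * indicator B (V x)) = indicator S x * 1 * (indicator B (V x) :: ennreal)"
        using decomp[OF x, of "\<lambda>w. indicator B (V x)"] by simp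
    qed
    finally show "(\<integral>\<^sup>+x. indicator S x * (\<Sum>w\<in>Wf. ennreal (nu (V x) w)) * indicator B (V x) \<partial>M)
        = (\<integral>\<^sup>+x. indicator S x * 1 * indicator B (V x) \<partial>M)" .
  qed measurable
  have taub: "AE x in M. \<forall>w\<in>Wf. x \<in> S \<longrightarrow> 0 < nu (V x) w \<longrightarrow> - c \<le> tau (V x, w) \<and> tau (V x, w) \<le> c"
  proof (rule AE_finite_allI[OF finWf])
    fix w
    define Bad where "Bad = {v\<in>space MV. \<not> (- c \<le> tau (v, w) \<and> tau (v, w) \<le> c)}"
    have Bad[measurable]: "Bad \<in> sets MV" unfolding Bad_def by measurable
    have "(\<integral>\<^sup>+x. indicator S x * ennreal (nu (V x) w) * indicator Bad (V x) \<partial>M)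
        = (\<integral>\<^sup>+x. indicator S x * indicator (Cw w) x * indicator Bad (V x) \<partial>M)"
      by (rule nukey[symmetric]) measurable
    also have "\<dots> = 0"
      apply (subst nn_integral_0_iff_AE)
       apply measurable
      using tau_lo tau_hi AE_space
      by eventually_elim (auto simp: indicator_def Cw_def Bad_def)
    finally have "AE x in M. indicator S x * ennreal (nu (V x) w) * indicator Bad (V x) = 0"
      by (subst (asm) nn_integral_0_iff_AE) auto
    with AE_space show "AE x in M. x \<in> S \<longrightarrow> 0 < nu (V x) w \<longrightarrow> - c \<le> tau (V x, w) \<and> tau (V x, w) \<le> c"
      by eventually_elim (auto simp: indicator_def Bad_def measurable_space[OF V_meas] split: if_splits)
  qed
  have nnall: "AE x in M. \<forall>w\<in>Wf. x \<in> S \<longrightarrow> 0 \<le> nu (V x) w"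
    by (rule AE_finite_allI[OF finWf]) (rule nunn)
  show ?thesis
    using mu1a mu0a Dfact Sumfact nnall taub AE_space
  proof eventually_elim
    case (elim x)
    show ?case
    proof (intro impI ballI)
      fix w assume Ex: "E x" and w: "w \<in> W ` space M" and pos: "0 < nu (V x) w"
      have xS: "x \<in> S" using Ex elim by (simp add: S_def)
      show "gamma_l a b (mu1 (V x)) (mu0 (V x)) (nu (V x) w) \<le> tau (V x, w) \<and>
           tau (V x, w) \<le> gamma_u a b (mu1 (V x)) (mu0 (V x)) (nu (V x) w)"
      proof (rule pointwise[where F=Wf and c=c and t="\<lambda>w. tau (V x, w)" and nu="\<lambda>w. nu (V x) w"])
        show "finite Wf" by (rule finWf)
        show "w \<in> Wf" using w by (simp add: Wf_def)
        show "\<forall>w\<in>Wf. 0 \<le> nu (V x) w" using elim xS by auto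
        show "\<forall>w\<in>Wf. 0 < nu (V x) w \<longrightarrow> - c \<le> tau (V x, w) \<and> tau (V x, w) \<le> c" using elim xS by auto
        show "c = b - a" by (simp add: c_def)
        show "a < b" by (rule ab)
        show "(\<Sum>w\<in>Wf. ennreal (nu (V x) w)) = 1" using elim xS by auto
        show "(\<Sum>w\<in>Wf. ennreal (nu (V x) w) * ennreal (tau (V x, w) + c)) + ennreal (mu0 (V x) - a) = ennreal (mu1 (V x) - a) + ennreal c"
          using elim xS by (simp add: Phi_def)
        show "a \<le> mu0 (V x)" "a \<le> mu1 (V x)" using elim Ex by auto
        show "0 < nu (V x) w" by (rule pos)
      qed
    qed
  qed
qed

end
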